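(* Let $p_0<0$, $\alpha\in(0,1)$, $\mathbb{S}:=\mathbb{R}/(2\pi\mathbb{Z})$, $\Omega:=\mathbb{S}\times(p_0,0)$. Let $C_1>1$ be a constant, independent of $L$, with the following property: for every integer $N\ge3$, every $L\ge1$ and all functions $u_1,u_2,u_3$ on $\overline\Omega$ with $\partial_q^nu_i\in C^\alpha(\overline\Omega)$ for $0\le n\le N$ and $\|\partial_q^n u_i\|_\alpha\le L^{n-1}(n-2)!$ for $2\le n\le N$, one has $\|\partial_q^n(u_1u_2u_3)\|_\alpha\le C_1\big(1+\sum_{i=1}^3\sum_{l=0}^1\|\partial_q^l u_i\|_\alpha\big)^6L^{n-1}(n-2)!$ for all $2\le n\le N$. Let $N\ge3$ and let $u$ be a function on $\overline\Omega$ with $\partial_q^n u\in C^\alpha(\overline\Omega)$ for all $0\le n\le N$ and $\inf_\Omega u>0$. If there exists a constant \[ L\ge \|\partial_q^2(1/u)\|_\alpha^2+C_1^2\Big(1+\sum_{l=0}^1\big(2\|\partial_q^l(1/u)\|_\alpha+\|\partial_q^{1+l}u\|_\alpha\big)\Big)^{12} \] such that $\|\partial_q^n u\|_\alpha\le L^{n-2}(n-3)!$ for all $3\le n\le N$, then \[ \|\partial_q^n(1/u)\|_\alpha\le L^{n-3/2}(n-2)!\qquad\text{for all } 2\le n\le N. \]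
   Context: $\|\cdot\|_\alpha$ denotes the norm of the Hölder space $C^\alpha(\overline\Omega)$, normalized so that $\|uv\|_\alpha\le\|u\|_\alpha\|v\|_\alpha$. $\partial_q$ denotes differentiation with respect to the first variable $q\in\mathbb{S}$. (Such a constant $C_1$ exists; in the paper it is the constant of the preceding product-estimate lemma.) *)

theory Defs
  imports "HOL-Analysis.Analysis"
begin

text \<open>Functions on the closure of Omega = S x (p0,0), S = R/(2 pi Z), are represented as
  functions on R x R, 2pi-periodic in the first variable q, considered on the strip
  R x [p0,0].\<close>

definition OmegaBar :: "real \<Rightarrow> (real \<times> real) set" where
  "OmegaBar p0 = {z. p0 \<le> snd z \<and> snd z \<le> 0}"

definition Omega :: "real \<Rightarrow> (real \<times> real) set" where
  "Omega p0 = {z. p0 < snd z \<and> snd z < 0}"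

definition periodic_q :: "(real \<times> real \<Rightarrow> real) \<Rightarrow> bool" where
  "periodic_q u \<longleftrightarrow> (\<forall>q p. u (q + 2 * pi, p) = u (q, p))"

definition dq :: "(real \<times> real \<Rightarrow> real) \<Rightarrow> real \<times> real \<Rightarrow> real" where
  "dq u = (\<lambda>z. deriv (\<lambda>t. u (t, snd z)) (fst z))"

definition dqn :: "nat \<Rightarrow> (real \<times> real \<Rightarrow> real) \<Rightarrow> real \<times> real \<Rightarrow> real" where
  "dqn n u = (dq ^^ n) u"

definition holder_quotients :: "real \<Rightarrow> real \<Rightarrow> (real \<times> real \<Rightarrow> real) \<Rightarrow> real set" where
  "holder_quotients \<alpha> p0 v =
     {\<bar>v x - v y\<bar> / (dist x y) powr \<alpha> | x y. x \<in> OmegaBar p0 \<and> y \<in> OmegaBar p0 \<and> x \<noteq> y}"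

definition in_Holder :: "real \<Rightarrow> real \<Rightarrow> (real \<times> real \<Rightarrow> real) \<Rightarrow> bool" where
  "in_Holder \<alpha> p0 v \<longleftrightarrow> bdd_above ((\<lambda>z. \<bar>v z\<bar>) ` OmegaBar p0) \<and> bdd_above (holder_quotients \<alpha> p0 v)"

text \<open>Hoelder norm: sup norm plus Hoelder seminorm (this is submultiplicative)\<close>
definition holder_norm :: "real \<Rightarrow> real \<Rightarrow> (real \<times> real \<Rightarrow> real) \<Rightarrow> real" where
  "holder_norm \<alpha> p0 v = (SUP z\<in>OmegaBar p0. \<bar>v z\<bar>) + Sup (holder_quotients \<alpha> p0 v)"

definition Cq :: "nat \<Rightarrow> real \<Rightarrow> real \<Rightarrow> (real \<times> real \<Rightarrow> real) \<Rightarrow> bool" where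
  "Cq N \<alpha> p0 u \<longleftrightarrow> periodic_q u \<and>
     (\<forall>n<N. \<forall>z\<in>OmegaBar p0. (\<lambda>t. dqn n u (t, snd z)) differentiable (at (fst z))) \<and>
     (\<forall>n\<le>N. in_Holder \<alpha> p0 (dqn n u))"

end

theory Submission
  imports Defs
begin


lemma Ob_line: "z \<in> OmegaBar p0 \<Longrightarrow> (t, snd z) \<in> OmegaBar p0"
  by (simp add: OmegaBar_def)

lemma Ob_ne: "p0 < 0 \<Longrightarrow> OmegaBar p0 \<noteq> {}"
  by (auto simp: OmegaBar_def intro!: exI[of _ "(0,0)"])

lemma hq_mem: "x \<in> OmegaBar p0 \<Longrightarrow> y \<in> OmegaBar p0 \<Longrightarrow> x \<noteq> y \<Longrightarrow>
   \<bar>v x - v y\<bar> / dist x y powr \<alpha> \<in> holder_quotients \<alpha> p0 v"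
  unfolding holder_quotients_def by blast

lemma hq_ne: "p0 < 0 \<Longrightarrow> holder_quotients \<alpha> p0 v \<noteq> {}"
  using hq_mem[of "(0,0)" p0 "(1,0)" v \<alpha>] by (auto simp: OmegaBar_def)

lemma hq_nonneg: "q \<in> holder_quotients \<alpha> p0 v \<Longrightarrow> 0 \<le> q"
  unfolding holder_quotients_def by auto

lemma holder_bounds:
  assumes "in_Holder \<alpha> p0 f" "p0 < 0" "x \<in> OmegaBar p0" "y \<in> OmegaBar p0"
  shows "\<bar>f x\<bar> \<le> (SUP z\<in>OmegaBar p0. \<bar>f z\<bar>)"
    and "0 \<le> Sup (holder_quotients \<alpha> p0 f)"
    and "\<bar>f x - f y\<bar> \<le> Sup (holder_quotients \<alpha> p0 f) * dist x y powr \<alpha>"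
proof -
  show "\<bar>f x\<bar> \<le> (SUP z\<in>OmegaBar p0. \<bar>f z\<bar>)"
    using assms by (intro cSUP_upper) (auto simp: in_Holder_def)
  have bd: "bdd_above (holder_quotients \<alpha> p0 f)" using assms by (simp add: in_Holder_def)
  obtain q where q: "q \<in> holder_quotients \<alpha> p0 f" using hq_ne[OF assms(2)] by blast
  show H0: "0 \<le> Sup (holder_quotients \<alpha> p0 f)"
    using cSup_upper2[OF q hq_nonneg[OF q] bd] .
  show "\<bar>f x - f y\<bar> \<le> Sup (holder_quotients \<alpha> p0 f) * dist x y powr \<alpha>"
  proof (cases "x = y")
    case True then show ?thesis using H0 by simp
  next
    case False
    then have dpos: "dist x y powr \<alpha> > 0" by simp
    have "\<bar>f x - f y\<bar> / dist x y powr \<alpha> \<le> Sup (holder_quotients \<alpha> p0 f)"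
      using cSup_upper[OF hq_mem[OF assms(3,4) False] bd] .
    then show ?thesis using dpos by (simp add: divide_le_eq)
  qed
qed

lemma holder_intro:
  assumes "p0 < 0" "\<And>x. x \<in> OmegaBar p0 \<Longrightarrow> \<bar>g x\<bar> \<le> A"
    "\<And>x y. x \<in> OmegaBar p0 \<Longrightarrow> y \<in> OmegaBar p0 \<Longrightarrow> x \<noteq> y \<Longrightarrow> \<bar>g x - g y\<bar> \<le> B * dist x y powr \<alpha>"
  shows "in_Holder \<alpha> p0 g" "holder_norm \<alpha> p0 g \<le> A + B"
proof -
  have Q: "\<forall>q\<in>holder_quotients \<alpha> p0 g. q \<le> B"
  proof
    fix q assume "q \<in> holder_quotients \<alpha> p0 g"
    then obtain x y where xy: "x \<in> OmegaBar p0" "y \<in> OmegaBar p0" "x \<noteq> y"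
      and q: "q = \<bar>g x - g y\<bar> / dist x y powr \<alpha>" unfolding holder_quotients_def by blast
    have "dist x y powr \<alpha> > 0" using xy by simp
    then show "q \<le> B" using assms(3)[OF xy] q by (simp add: divide_le_eq)
  qed
  show "in_Holder \<alpha> p0 g" unfolding in_Holder_def bdd_above_def using assms(2) Q by blast
  have "(SUP z\<in>OmegaBar p0. \<bar>g z\<bar>) \<le> A" using assms(2) Ob_ne[OF assms(1)] by (intro cSUP_least) auto
  moreover have "Sup (holder_quotients \<alpha> p0 g) \<le> B" using Q hq_ne[OF assms(1)] by (intro cSup_least) auto
  ultimately show "holder_norm \<alpha> p0 g \<le> A + B" unfolding holder_norm_def by simp
qed

lemma hn_nonneg: assumes "in_Holder \<alpha> p0 f" "p0 < 0" shows "0 \<le> holder_norm \<alpha> p0 f"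
proof -
  obtain x where x: "x \<in> OmegaBar p0" using Ob_ne[OF assms(2)] by blast
  show ?thesis using holder_bounds[OF assms x x] unfolding holder_norm_def by linarith
qed

lemma hn_neg: "holder_norm \<alpha> p0 (\<lambda>z. - f z) = holder_norm \<alpha> p0 f"
  and hol_neg: "in_Holder \<alpha> p0 (\<lambda>z. - f z) = in_Holder \<alpha> p0 f"
proof -
  have "holder_quotients \<alpha> p0 (\<lambda>z. - f z) = holder_quotients \<alpha> p0 f"
    unfolding holder_quotients_def by (simp add: abs_minus_commute)
  then show "holder_norm \<alpha> p0 (\<lambda>z. - f z) = holder_norm \<alpha> p0 f"
    "in_Holder \<alpha> p0 (\<lambda>z. - f z) = in_Holder \<alpha> p0 f"
    unfolding holder_norm_def in_Holder_def by simp_all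
qed

lemma hn_cong: "(\<And>z. z \<in> OmegaBar p0 \<Longrightarrow> f z = g z) \<Longrightarrow> holder_norm \<alpha> p0 f = holder_norm \<alpha> p0 g"
  and hol_cong: "(\<And>z. z \<in> OmegaBar p0 \<Longrightarrow> f z = g z) \<Longrightarrow> in_Holder \<alpha> p0 f = in_Holder \<alpha> p0 g"
proof -
  assume e: "\<And>z. z \<in> OmegaBar p0 \<Longrightarrow> f z = g z"
  have "holder_quotients \<alpha> p0 f = holder_quotients \<alpha> p0 g"
    unfolding holder_quotients_def by (auto simp: e) (metis e)+
  moreover have "(\<lambda>z. \<bar>f z\<bar>) ` OmegaBar p0 = (\<lambda>z. \<bar>g z\<bar>) ` OmegaBar p0" by (simp add: e)
  ultimately show "holder_norm \<alpha> p0 f = holder_norm \<alpha> p0 g" "in_Holder \<alpha> p0 f = in_Holder \<alpha> p0 g"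
    unfolding holder_norm_def in_Holder_def by (simp_all add: e)
next
qed


lemma hol_add:
  assumes f: "in_Holder \<alpha> p0 f" and g: "in_Holder \<alpha> p0 g" and p: "p0 < 0"
  shows "in_Holder \<alpha> p0 (\<lambda>z. f z + g z)"
    "holder_norm \<alpha> p0 (\<lambda>z. f z + g z) \<le> holder_norm \<alpha> p0 f + holder_norm \<alpha> p0 g"
proof -
  let ?Sf = "(SUP z\<in>OmegaBar p0. \<bar>f z\<bar>)" and ?Sg = "(SUP z\<in>OmegaBar p0. \<bar>g z\<bar>)"
  let ?Hf = "Sup (holder_quotients \<alpha> p0 f)" and ?Hg = "Sup (holder_quotients \<alpha> p0 g)"
  have A: "\<bar>f x + g x\<bar> \<le> ?Sf + ?Sg" if "x \<in> OmegaBar p0" for x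
    using holder_bounds(1)[OF f p that that] holder_bounds(1)[OF g p that that] by linarith
  have B: "\<bar>(f x + g x) - (f y + g y)\<bar> \<le> (?Hf + ?Hg) * dist x y powr \<alpha>"
    if "x \<in> OmegaBar p0" "y \<in> OmegaBar p0" "x \<noteq> y" for x y
    using holder_bounds(3)[OF f p that(1,2)] holder_bounds(3)[OF g p that(1,2)]
    by (simp add: algebra_simps)
  show "in_Holder \<alpha> p0 (\<lambda>z. f z + g z)" using holder_intro(1)[OF p A B] by simp
  show "holder_norm \<alpha> p0 (\<lambda>z. f z + g z) \<le> holder_norm \<alpha> p0 f + holder_norm \<alpha> p0 g"
    using holder_intro(2)[OF p A B] unfolding holder_norm_def by simp
qed

lemma hol_mult:
  assumes f: "in_Holder \<alpha> p0 f" and g: "in_Holder \<alpha> p0 g" and p: "p0 < 0"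
  shows "in_Holder \<alpha> p0 (\<lambda>z. f z * g z)"
    "holder_norm \<alpha> p0 (\<lambda>z. f z * g z) \<le> holder_norm \<alpha> p0 f * holder_norm \<alpha> p0 g"
proof -
  let ?Sf = "(SUP z\<in>OmegaBar p0. \<bar>f z\<bar>)" and ?Sg = "(SUP z\<in>OmegaBar p0. \<bar>g z\<bar>)"
  let ?Hf = "Sup (holder_quotients \<alpha> p0 f)" and ?Hg = "Sup (holder_quotients \<alpha> p0 g)"
  have A: "\<bar>f x * g x\<bar> \<le> ?Sf * ?Sg" if "x \<in> OmegaBar p0" for x
    using holder_bounds(1)[OF f p that that] holder_bounds(1)[OF g p that that]
    by (simp add: abs_mult mult_mono')
  have B: "\<bar>f x * g x - f y * g y\<bar> \<le> (?Sf * ?Hg + ?Sg * ?Hf) * dist x y powr \<alpha>"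
    if "x \<in> OmegaBar p0" "y \<in> OmegaBar p0" "x \<noteq> y" for x y
  proof -
    have e: "f x * g x - f y * g y = f x * (g x - g y) + g y * (f x - f y)" by (simp add: algebra_simps)
    have 1: "\<bar>f x * (g x - g y)\<bar> \<le> ?Sf * (?Hg * dist x y powr \<alpha>)"
      unfolding abs_mult using holder_bounds(1)[OF f p that(1) that(1)] holder_bounds(3)[OF g p that(1,2)]
      by (intro mult_mono) auto
    have 2: "\<bar>g y * (f x - f y)\<bar> \<le> ?Sg * (?Hf * dist x y powr \<alpha>)"
      unfolding abs_mult using holder_bounds(1)[OF g p that(2) that(2)] holder_bounds(3)[OF f p that(1,2)]
      by (intro mult_mono) auto
    show ?thesis unfolding e using 1 2 abs_triangle_ineq[of "f x * (g x - g y)" "g y * (f x - f y)"]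
      by (simp add: algebra_simps)
  qed
  show "in_Holder \<alpha> p0 (\<lambda>z. f z * g z)" using holder_intro(1)[OF p A B] by simp
  have "holder_norm \<alpha> p0 (\<lambda>z. f z * g z) \<le> ?Sf * ?Sg + (?Sf * ?Hg + ?Sg * ?Hf)"
    using holder_intro(2)[OF p A B] by simp
  also have "\<dots> \<le> (?Sf + ?Hf) * (?Sg + ?Hg)"
    using holder_bounds(2)[OF f p] holder_bounds(2)[OF g p] Ob_ne[OF p]
    by (auto simp: algebra_simps)
  finally show "holder_norm \<alpha> p0 (\<lambda>z. f z * g z) \<le> holder_norm \<alpha> p0 f * holder_norm \<alpha> p0 g"
    unfolding holder_norm_def .
qed

lemma hol_inv:
  assumes f: "in_Holder \<alpha> p0 f" and p: "p0 < 0" and c: "c > 0"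
    and lb: "\<And>z. z \<in> OmegaBar p0 \<Longrightarrow> f z \<ge> c"
  shows "in_Holder \<alpha> p0 (\<lambda>z. 1 / f z)"
proof -
  let ?Hf = "Sup (holder_quotients \<alpha> p0 f)"
  have A: "\<bar>1 / f x\<bar> \<le> 1 / c" if "x \<in> OmegaBar p0" for x
    using lb[OF that] c by (simp add: frac_le)
  have B: "\<bar>1 / f x - 1 / f y\<bar> \<le> (?Hf / c^2) * dist x y powr \<alpha>"
    if "x \<in> OmegaBar p0" "y \<in> OmegaBar p0" "x \<noteq> y" for x y
  proof -
    have fx: "f x \<ge> c" "f y \<ge> c" using lb that by auto
    have e: "\<bar>1 / f x - 1 / f y\<bar> = \<bar>f x - f y\<bar> / (f x * f y)"
      using fx c by (simp add: field_simps abs_minus_commute abs_mult)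
    have "c^2 \<le> f x * f y" using fx c unfolding power2_eq_square by (intro mult_mono) auto
    then have "\<bar>f x - f y\<bar> / (f x * f y) \<le> \<bar>f x - f y\<bar> / c^2"
      using c fx by (intro divide_left_mono) (auto intro!: mult_pos_pos)
    also have "\<dots> \<le> (?Hf * dist x y powr \<alpha>) / c^2"
      using holder_bounds(3)[OF f p that(1,2)] by (intro divide_right_mono) auto
    finally show ?thesis using e by simp
  qed
  show ?thesis using holder_intro(1)[OF p A B] .
qed


definition D :: "real \<Rightarrow> real \<Rightarrow> nat \<Rightarrow> (real \<times> real \<Rightarrow> real) \<Rightarrow> bool" where
  "D \<alpha> p0 k f \<longleftrightarrow> (\<forall>n<k. \<forall>z\<in>OmegaBar p0. (\<lambda>t. dqn n f (t, snd z)) differentiable (at (fst z))) \<and>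
     (\<forall>n\<le>k. in_Holder \<alpha> p0 (dqn n f))"

lemma Cq_D: "Cq N \<alpha> p0 u \<longleftrightarrow> periodic_q u \<and> D \<alpha> p0 N u"
  by (simp add: Cq_def D_def)

lemma dqn_0[simp]: "dqn 0 f = f" by (simp add: dqn_def)
lemma dqn_Suc: "dqn (Suc n) f = dqn n (dq f)" by (simp only: dqn_def funpow_Suc_right comp_def)
lemma dqn_Suc': "dqn (Suc n) f = dq (dqn n f)" by (simp add: dqn_def)

lemma dq_cong: "(\<And>z. z \<in> OmegaBar p0 \<Longrightarrow> f z = g z) \<Longrightarrow> z \<in> OmegaBar p0 \<Longrightarrow> dq f z = dq g z"
proof -
  assume e: "\<And>z. z \<in> OmegaBar p0 \<Longrightarrow> f z = g z" and z: "z \<in> OmegaBar p0"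
  have "(\<lambda>t. f (t, snd z)) = (\<lambda>t. g (t, snd z))" using e Ob_line[OF z] by auto
  then show ?thesis by (simp add: dq_def)
qed

lemma dqn_cong: "(\<And>z. z \<in> OmegaBar p0 \<Longrightarrow> f z = g z) \<Longrightarrow> z \<in> OmegaBar p0 \<Longrightarrow> dqn n f z = dqn n g z"
proof (induction n arbitrary: z)
  case 0 then show ?case by simp
next
  case (Suc n) then show ?case unfolding dqn_Suc' by (intro dq_cong[of p0]) auto
qed

lemma D_0: "D \<alpha> p0 0 f \<longleftrightarrow> in_Holder \<alpha> p0 f"
  by (simp add: D_def)

lemma D_Suc: "D \<alpha> p0 (Suc k) f \<longleftrightarrow> in_Holder \<alpha> p0 f \<and>
   (\<forall>z\<in>OmegaBar p0. (\<lambda>t. f (t, snd z)) differentiable (at (fst z))) \<and> D \<alpha> p0 k (dq f)"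
proof -
  have 1: "(\<forall>n\<le>m. P n) \<longleftrightarrow> (\<forall>n<Suc m. P n)" for m and P :: "nat \<Rightarrow> bool"
    by (auto simp: less_Suc_eq_le)
  show ?thesis unfolding D_def 1 All_less_Suc2 dqn_Suc dqn_0 by auto
qed


lemma D_le: "D \<alpha> p0 m f \<Longrightarrow> k \<le> m \<Longrightarrow> D \<alpha> p0 k f"
  unfolding D_def by auto

lemma D_hol: "D \<alpha> p0 k f \<Longrightarrow> n \<le> k \<Longrightarrow> in_Holder \<alpha> p0 (dqn n f)"
  unfolding D_def by auto

lemma D_diff: "D \<alpha> p0 k f \<Longrightarrow> n < k \<Longrightarrow> z \<in> OmegaBar p0 \<Longrightarrow> (\<lambda>t. dqn n f (t, snd z)) differentiable (at (fst z))"
  unfolding D_def by auto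

lemma D_cong: "(\<And>z. z \<in> OmegaBar p0 \<Longrightarrow> f z = g z) \<Longrightarrow> D \<alpha> p0 k f \<Longrightarrow> D \<alpha> p0 k g"
proof (induction k arbitrary: f g)
  case 0 then show ?case by (simp add: D_0 hol_cong[of p0 f g])
next
  case (Suc k)
  have l: "(\<lambda>t. f (t, snd z)) = (\<lambda>t. g (t, snd z))" if "z \<in> OmegaBar p0" for z
    using Suc.prems(1) Ob_line[OF that] by auto
  show ?case using Suc.prems unfolding D_Suc
    using hol_cong[of p0 f g] l Suc.IH[of "dq f" "dq g"] dq_cong[of p0 f g] by auto
qed

lemma deriv_of: "(\<lambda>t. f (t, snd z)) differentiable (at (fst z)) \<Longrightarrow>
   ((\<lambda>t. f (t, snd z)) has_real_derivative dq f z) (at (fst z))"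
  unfolding dq_def by (simp add: DERIV_deriv_iff_real_differentiable)

lemma dq_add:
  assumes "(\<lambda>t. f (t, snd z)) differentiable (at (fst z))" "(\<lambda>t. g (t, snd z)) differentiable (at (fst z))"
  shows "dq (\<lambda>z. f z + g z) z = dq f z + dq g z"
    "(\<lambda>t. f (t, snd z) + g (t, snd z)) differentiable (at (fst z))"
proof -
  have d: "((\<lambda>t. f (t, snd z) + g (t, snd z)) has_real_derivative dq f z + dq g z) (at (fst z))"
    using DERIV_add[OF deriv_of[OF assms(1)] deriv_of[OF assms(2)]] .
  then show "dq (\<lambda>z. f z + g z) z = dq f z + dq g z" unfolding dq_def[of "\<lambda>z. f z + g z"]
    by (simp add: DERIV_imp_deriv)
  show "(\<lambda>t. f (t, snd z) + g (t, snd z)) differentiable (at (fst z))"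
    using d real_differentiable_def by blast
qed

lemma dq_mult:
  assumes "(\<lambda>t. f (t, snd z)) differentiable (at (fst z))" "(\<lambda>t. g (t, snd z)) differentiable (at (fst z))"
  shows "dq (\<lambda>z. f z * g z) z = dq f z * g z + f z * dq g z"
    "(\<lambda>t. f (t, snd z) * g (t, snd z)) differentiable (at (fst z))"
proof -
  have d: "((\<lambda>t. f (t, snd z) * g (t, snd z)) has_real_derivative dq f z * g z + f z * dq g z) (at (fst z))"
    using DERIV_mult'[OF deriv_of[OF assms(1)] deriv_of[OF assms(2)]] by (simp add: add.commute)
  then show "dq (\<lambda>z. f z * g z) z = dq f z * g z + f z * dq g z" unfolding dq_def[of "\<lambda>z. f z * g z"]
    by (simp add: DERIV_imp_deriv)
  show "(\<lambda>t. f (t, snd z) * g (t, snd z)) differentiable (at (fst z))"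
    using d real_differentiable_def by blast
qed

lemma dq_neg:
  assumes "(\<lambda>t. f (t, snd z)) differentiable (at (fst z))"
  shows "dq (\<lambda>z. - f z) z = - dq f z"
    "(\<lambda>t. - f (t, snd z)) differentiable (at (fst z))"
proof -
  have d: "((\<lambda>t. - f (t, snd z)) has_real_derivative - dq f z) (at (fst z))"
    using DERIV_minus[OF deriv_of[OF assms(1)]] by simp
  then show "dq (\<lambda>z. - f z) z = - dq f z" unfolding dq_def[of "\<lambda>z. - f z"]
    by (simp add: DERIV_imp_deriv)
  show "(\<lambda>t. - f (t, snd z)) differentiable (at (fst z))"
    using d real_differentiable_def by blast
qed

lemma dq_inv:
  assumes "(\<lambda>t. f (t, snd z)) differentiable (at (fst z))" "f z \<noteq> 0"
  shows "dq (\<lambda>z. 1 / f z) z = - dq f z * (1 / f z) * (1 / f z)"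
    "(\<lambda>t. 1 / f (t, snd z)) differentiable (at (fst z))"
proof -
  have fz: "f (fst z, snd z) \<noteq> 0" using assms(2) by simp
  have d: "((\<lambda>t. 1 / f (t, snd z)) has_real_derivative - dq f z * (1 / f z) * (1 / f z)) (at (fst z))"
    using DERIV_inverse_fun[OF deriv_of[OF assms(1)] fz]
    by (simp add: inverse_eq_divide power2_eq_square field_simps)
  then show "dq (\<lambda>z. 1 / f z) z = - dq f z * (1 / f z) * (1 / f z)" unfolding dq_def[of "\<lambda>z. 1 / f z"]
    by (simp add: DERIV_imp_deriv)
  show "(\<lambda>t. 1 / f (t, snd z)) differentiable (at (fst z))"
    using d real_differentiable_def by blast
qed


lemma D_add: "p0 < 0 \<Longrightarrow> D \<alpha> p0 k f \<Longrightarrow> D \<alpha> p0 k g \<Longrightarrow> D \<alpha> p0 k (\<lambda>z. f z + g z)"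
proof (induction k arbitrary: f g)
  case 0 then show ?case by (simp add: D_0 hol_add)
next
  case (Suc k)
  have "D \<alpha> p0 k (\<lambda>z. dq f z + dq g z)" using Suc by (simp add: D_Suc)
  then have "D \<alpha> p0 k (dq (\<lambda>z. f z + g z))"
    by (rule D_cong[rotated]) (use Suc.prems in \<open>auto simp: D_Suc dq_add\<close>)
  then show ?case using Suc.prems by (auto simp: D_Suc hol_add dq_add(2))
qed

lemma D_neg: "p0 < 0 \<Longrightarrow> D \<alpha> p0 k f \<Longrightarrow> D \<alpha> p0 k (\<lambda>z. - f z)"
proof (induction k arbitrary: f)
  case 0 then show ?case by (simp add: D_0 hol_neg)
next
  case (Suc k)
  have "D \<alpha> p0 k (\<lambda>z. - dq f z)" using Suc by (simp add: D_Suc)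
  then have "D \<alpha> p0 k (dq (\<lambda>z. - f z))"
    by (rule D_cong[rotated]) (use Suc.prems in \<open>auto simp: D_Suc dq_neg\<close>)
  then show ?case using Suc.prems by (auto simp: D_Suc hol_neg dq_neg(2))
qed

lemma D_mult: "p0 < 0 \<Longrightarrow> D \<alpha> p0 k f \<Longrightarrow> D \<alpha> p0 k g \<Longrightarrow> D \<alpha> p0 k (\<lambda>z. f z * g z)"
proof (induction k arbitrary: f g)
  case 0 then show ?case by (simp add: D_0 hol_mult)
next
  case (Suc k)
  have fk: "D \<alpha> p0 k f" "D \<alpha> p0 k g" using Suc.prems D_le[of \<alpha> p0 "Suc k" _ k] by auto
  have "D \<alpha> p0 k (\<lambda>z. dq f z * g z)" "D \<alpha> p0 k (\<lambda>z. f z * dq g z)"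
    using Suc fk by (auto simp: D_Suc)
  then have "D \<alpha> p0 k (\<lambda>z. dq f z * g z + f z * dq g z)" using D_add Suc.prems(1) by blast
  then have "D \<alpha> p0 k (dq (\<lambda>z. f z * g z))"
    by (rule D_cong[rotated]) (use Suc.prems in \<open>auto simp: D_Suc dq_mult\<close>)
  then show ?case using Suc.prems by (auto simp: D_Suc hol_mult dq_mult(2))
qed

lemma D_inv:
  assumes p: "p0 < 0" and c: "c > 0" and lb: "\<And>z. z \<in> OmegaBar p0 \<Longrightarrow> f z \<ge> c"
  shows "D \<alpha> p0 k f \<Longrightarrow> D \<alpha> p0 k (\<lambda>z. 1 / f z)"
proof (induction k)
  case 0 then show ?case using hol_inv[OF _ p c lb] by (simp add: D_0)
next
  case (Suc k)
  have fk: "D \<alpha> p0 k f" using Suc.prems D_le[of \<alpha> p0 "Suc k" _ k] by auto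
  have nz: "f z \<noteq> 0" if "z \<in> OmegaBar p0" for z using lb[OF that] c by auto
  have "D \<alpha> p0 k (\<lambda>z. - dq f z)" using Suc.prems p by (simp add: D_Suc D_neg)
  then have "D \<alpha> p0 k (\<lambda>z. - dq f z * (1 / f z) * (1 / f z))"
    using Suc.IH[OF fk] D_mult p by blast
  then have "D \<alpha> p0 k (dq (\<lambda>z. 1 / f z))"
    by (rule D_cong[rotated]) (use Suc.prems nz in \<open>auto simp: D_Suc dq_inv\<close>)
  then show ?case using Suc.prems nz hol_inv[OF _ p c lb] by (auto simp: D_Suc dq_inv(2))
qed


lemma deriv_periodic: "(\<And>t. g (t + c) = g t) \<Longrightarrow> deriv g (x + c) = deriv g x"
proof -
  assume e: "\<And>t. g (t + c) = g t"
  have "(\<lambda>t. g (t + c)) = g" using e by auto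
  then have "\<And>D. (g has_field_derivative D) (at (x + c)) = (g has_field_derivative D) (at x)"
    using DERIV_shift[of g _ x c] by simp
  then show ?thesis unfolding deriv_def by simp
qed

lemma periodic_dq: "periodic_q f \<Longrightarrow> periodic_q (dq f)"
  unfolding periodic_q_def dq_def by (auto intro: deriv_periodic)

lemma periodic_neg: "periodic_q f \<Longrightarrow> periodic_q (\<lambda>z. - f z)"
  unfolding periodic_q_def by auto

lemma periodic_inv: "periodic_q f \<Longrightarrow> periodic_q (\<lambda>z. 1 / f z)"
  unfolding periodic_q_def by auto

lemma dqn_neg: "D \<alpha> p0 k f \<Longrightarrow> m \<le> k \<Longrightarrow> z \<in> OmegaBar p0 \<Longrightarrow> dqn m (\<lambda>z. - f z) z = - dqn m f z"
proof (induction m arbitrary: f k z)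
  case 0 then show ?case by simp
next
  case (Suc m)
  obtain k' where k: "k = Suc k'" using Suc.prems(2) by (cases k) auto
  have Dk: "D \<alpha> p0 k' (dq f)" and df: "\<forall>z\<in>OmegaBar p0. (\<lambda>t. f (t, snd z)) differentiable (at (fst z))"
    using Suc.prems(1) unfolding k D_Suc by auto
  have "dqn m (dq (\<lambda>z. - f z)) z = dqn m (\<lambda>z. - dq f z) z"
    using Suc.prems(3) by (intro dqn_cong[of p0]) (auto simp: dq_neg df)
  also have "\<dots> = - dqn m (dq f) z" using Suc.IH[OF Dk _ Suc.prems(3)] Suc.prems(2) k by simp
  finally show ?case by (simp add: dqn_Suc)
qed

lemma pos_on_Ob:
  assumes p: "p0 < 0" and u: "in_Holder \<alpha> p0 u" and a: "0 < \<alpha>" and c: "Inf (u ` Omega p0) > 0"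
  shows "\<And>z. z \<in> OmegaBar p0 \<Longrightarrow> u z \<ge> Inf (u ` Omega p0)"
proof -
  let ?c = "Inf (u ` Omega p0)"
  have sub: "Omega p0 \<subseteq> OmegaBar p0" by (auto simp: Omega_def OmegaBar_def)
  obtain B where B: "\<And>z. z \<in> OmegaBar p0 \<Longrightarrow> \<bar>u z\<bar> \<le> B"
    using u unfolding in_Holder_def bdd_above_def by auto
  have bb: "bdd_below (u ` Omega p0)" unfolding bdd_below_def
    using B sub by (auto intro!: exI[of _ "-B"]) (metis abs_le_D2 minus_le_iff subsetD)
  have inO: "u w \<ge> ?c" if "w \<in> Omega p0" for w using cInf_lower[OF _ bb] that by auto
  fix z assume z: "z \<in> OmegaBar p0"
  show "u z \<ge> ?c"
  proof (rule ccontr)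
    assume "\<not> u z \<ge> ?c"
    then have dpos: "?c - u z > 0" by simp
    define H where "H = Sup (holder_quotients \<alpha> p0 u)"
    have H0: "H \<ge> 0" using holder_bounds(2)[OF u p z z] H_def by simp
    define r where "r = ((?c - u z) / (H + 1)) powr (1 / \<alpha>)"
    have r0: "r > 0" using dpos H0 by (simp add: r_def)
    define lam where "lam = min 1 (r / (- p0 + 1))"
    have lam0: "0 < lam" "lam \<le> 1" using r0 p by (auto simp: lam_def)
    define w where "w = (fst z, (1 - lam) * snd z + lam * (p0 / 2))"
    have zb: "p0 \<le> snd z" "snd z \<le> 0" using z by (auto simp: OmegaBar_def)
    have "p0 < (1 - lam) * snd z + lam * (p0 / 2)"
    proof -
      have "(1 - lam) * p0 \<le> (1 - lam) * snd z" using zb lam0 by (intro mult_left_mono) auto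
      moreover have "lam * p0 < lam * (p0 / 2)" using lam0 p by simp
      ultimately show ?thesis by (simp add: algebra_simps)
    qed
    moreover have "(1 - lam) * snd z + lam * (p0 / 2) < 0"
    proof -
      have "(1 - lam) * snd z \<le> 0" using zb lam0 by (simp add: mult_nonneg_nonpos)
      moreover have "lam * (p0 / 2) < 0" using lam0 p by (simp add: mult_pos_neg)
      ultimately show ?thesis by simp
    qed
    ultimately have wO: "w \<in> Omega p0" by (simp add: w_def Omega_def)
    then have wb: "w \<in> OmegaBar p0" using sub by auto
    have dist: "dist z w = lam * \<bar>snd z - p0 / 2\<bar>"
    proof -
      have "dist z w = dist (snd z) (snd w)" unfolding w_def
        by (simp add: dist_Pair_Pair[of "fst z" "snd z", simplified] )
      also have "\<dots> = \<bar>lam * (snd z - p0/2)\<bar>" by (simp add: w_def dist_real_def algebra_simps)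
      finally show ?thesis using lam0 by (simp add: abs_mult)
    qed
    have "\<bar>snd z - p0 / 2\<bar> \<le> - p0 + 1" using zb p by auto
    then have "dist z w \<le> lam * (- p0 + 1)" unfolding dist using lam0 by (intro mult_left_mono) auto
    also have "\<dots> \<le> r" using p unfolding lam_def by (auto simp: min_def field_simps)
    finally have dr: "dist z w \<le> r" .
    have "dist z w powr \<alpha> \<le> r powr \<alpha>" using dr a by (intro powr_mono2) auto
    also have "r powr \<alpha> = (?c - u z) / (H + 1)" unfolding r_def using dpos H0 a
      by (simp add: powr_powr)
    finally have dd: "dist z w powr \<alpha> \<le> (?c - u z) / (H + 1)" .
    have "\<bar>u z - u w\<bar> \<le> H * dist z w powr \<alpha>" using holder_bounds(3)[OF u p z wb] H_def by simp
    also have "\<dots> \<le> H * ((?c - u z) / (H + 1))" using dd H0 by (intro mult_left_mono) auto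
    also have "\<dots> < ?c - u z" using dpos H0 by (simp add: field_simps)
    finally have "\<bar>u z - u w\<bar> < ?c - u z" .
    then show False using inO[OF wO] by linarith
  qed
qed


lemma dqn_1: "dqn 1 f = dq f" by (simp add: dqn_Suc')
lemma dqn_Suc0: "dqn (Suc 0) f = dq f" by (simp add: dqn_Suc')
lemma dqn_2: "dqn 2 f = dq (dq f)" by (simp add: numeral_2_eq_2 dqn_Suc')

lemma prod2:
  assumes p: "p0 < 0" and f: "D \<alpha> p0 2 f" and g: "D \<alpha> p0 2 g"
  shows "D \<alpha> p0 2 (\<lambda>z. f z * g z)"
    "holder_norm \<alpha> p0 (\<lambda>z. f z * g z) \<le> holder_norm \<alpha> p0 f * holder_norm \<alpha> p0 g"
    "holder_norm \<alpha> p0 (dqn 1 (\<lambda>z. f z * g z)) \<le> holder_norm \<alpha> p0 (dqn 1 f) * holder_norm \<alpha> p0 g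
        + holder_norm \<alpha> p0 f * holder_norm \<alpha> p0 (dqn 1 g)"
    "holder_norm \<alpha> p0 (dqn 2 (\<lambda>z. f z * g z)) \<le> holder_norm \<alpha> p0 (dqn 2 f) * holder_norm \<alpha> p0 g
        + 2 * (holder_norm \<alpha> p0 (dqn 1 f) * holder_norm \<alpha> p0 (dqn 1 g))
        + holder_norm \<alpha> p0 f * holder_norm \<alpha> p0 (dqn 2 g)"
proof -
  show "D \<alpha> p0 2 (\<lambda>z. f z * g z)" using D_mult[OF p f g] .
  have hf: "in_Holder \<alpha> p0 f" "in_Holder \<alpha> p0 (dq f)" "in_Holder \<alpha> p0 (dq (dq f))"
    using D_hol[OF f, of 0] D_hol[OF f, of 1] D_hol[OF f, of 2] by (auto simp: dqn_1 dqn_Suc0 dqn_2)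
  have hg: "in_Holder \<alpha> p0 g" "in_Holder \<alpha> p0 (dq g)" "in_Holder \<alpha> p0 (dq (dq g))"
    using D_hol[OF g, of 0] D_hol[OF g, of 1] D_hol[OF g, of 2] by (auto simp: dqn_1 dqn_Suc0 dqn_2)
  have df: "(\<lambda>t. f (t, snd z)) differentiable (at (fst z))" "(\<lambda>t. dq f (t, snd z)) differentiable (at (fst z))"
    if "z \<in> OmegaBar p0" for z
    using D_diff[OF f, of 0 z] D_diff[OF f, of 1 z] that by (auto simp: dqn_1 dqn_Suc0)
  have dg: "(\<lambda>t. g (t, snd z)) differentiable (at (fst z))" "(\<lambda>t. dq g (t, snd z)) differentiable (at (fst z))"
    if "z \<in> OmegaBar p0" for z
    using D_diff[OF g, of 0 z] D_diff[OF g, of 1 z] that by (auto simp: dqn_1 dqn_Suc0)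
  have e1: "dq (\<lambda>z. f z * g z) z = dq f z * g z + f z * dq g z" if "z \<in> OmegaBar p0" for z
    using dq_mult df dg that by blast
  show "holder_norm \<alpha> p0 (\<lambda>z. f z * g z) \<le> holder_norm \<alpha> p0 f * holder_norm \<alpha> p0 g"
    using hol_mult[OF hf(1) hg(1) p] by simp
  have "holder_norm \<alpha> p0 (dqn 1 (\<lambda>z. f z * g z)) = holder_norm \<alpha> p0 (\<lambda>z. dq f z * g z + f z * dq g z)"
    unfolding dqn_1 by (rule hn_cong) (simp add: e1)
  also have "\<dots> \<le> holder_norm \<alpha> p0 (\<lambda>z. dq f z * g z) + holder_norm \<alpha> p0 (\<lambda>z. f z * dq g z)"
    by (rule hol_add(2)) (auto intro: hol_mult hf hg p)
  also have "\<dots> \<le> holder_norm \<alpha> p0 (dqn 1 f) * holder_norm \<alpha> p0 g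
        + holder_norm \<alpha> p0 f * holder_norm \<alpha> p0 (dqn 1 g)"
    unfolding dqn_1 using hol_mult(2)[OF hf(2) hg(1) p] hol_mult(2)[OF hf(1) hg(2) p] by linarith
  finally show "holder_norm \<alpha> p0 (dqn 1 (\<lambda>z. f z * g z)) \<le> holder_norm \<alpha> p0 (dqn 1 f) * holder_norm \<alpha> p0 g
        + holder_norm \<alpha> p0 f * holder_norm \<alpha> p0 (dqn 1 g)" .
  have e2: "dq (dq (\<lambda>z. f z * g z)) z = (dq (dq f) z * g z + dq f z * dq g z) + (dq f z * dq g z + f z * dq (dq g) z)"
    if "z \<in> OmegaBar p0" for z
  proof -
    have "dq (dq (\<lambda>z. f z * g z)) z = dq (\<lambda>z. dq f z * g z + f z * dq g z) z"
      using that by (intro dq_cong[of p0]) (simp add: e1)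
    also have "\<dots> = dq (\<lambda>z. dq f z * g z) z + dq (\<lambda>z. f z * dq g z) z"
      using dq_add[of "\<lambda>z. dq f z * g z" z "\<lambda>z. f z * dq g z"] dq_mult(2) df[OF that] dg[OF that] by simp
    also have "\<dots> = (dq (dq f) z * g z + dq f z * dq g z) + (dq f z * dq g z + f z * dq (dq g) z)"
      using dq_mult(1) df[OF that] dg[OF that] by simp
    finally show ?thesis .
  qed
  have "holder_norm \<alpha> p0 (dqn 2 (\<lambda>z. f z * g z)) = holder_norm \<alpha> p0
     (\<lambda>z. (dq (dq f) z * g z + dq f z * dq g z) + (dq f z * dq g z + f z * dq (dq g) z))"
    unfolding dqn_2 by (rule hn_cong) (simp add: e2)
  also have "\<dots> \<le> holder_norm \<alpha> p0 (\<lambda>z. dq (dq f) z * g z + dq f z * dq g z)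
     + holder_norm \<alpha> p0 (\<lambda>z. dq f z * dq g z + f z * dq (dq g) z)"
    by (rule hol_add(2)) (auto intro!: hol_add hol_mult hf hg p)
  also have "\<dots> \<le> (holder_norm \<alpha> p0 (\<lambda>z. dq (dq f) z * g z) + holder_norm \<alpha> p0 (\<lambda>z. dq f z * dq g z))
     + (holder_norm \<alpha> p0 (\<lambda>z. dq f z * dq g z) + holder_norm \<alpha> p0 (\<lambda>z. f z * dq (dq g) z))"
    by (intro add_mono hol_add(2)) (auto intro!: hol_mult hf hg p)
  also have "\<dots> \<le> holder_norm \<alpha> p0 (dqn 2 f) * holder_norm \<alpha> p0 g
        + 2 * (holder_norm \<alpha> p0 (dqn 1 f) * holder_norm \<alpha> p0 (dqn 1 g))
        + holder_norm \<alpha> p0 f * holder_norm \<alpha> p0 (dqn 2 g)"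
    unfolding dqn_1 dqn_2 using hol_mult(2)[OF hf(3) hg(1) p] hol_mult(2)[OF hf(2) hg(2) p]
      hol_mult(2)[OF hf(1) hg(3) p] by linarith
  finally show "holder_norm \<alpha> p0 (dqn 2 (\<lambda>z. f z * g z)) \<le> holder_norm \<alpha> p0 (dqn 2 f) * holder_norm \<alpha> p0 g
        + 2 * (holder_norm \<alpha> p0 (dqn 1 f) * holder_norm \<alpha> p0 (dqn 1 g))
        + holder_norm \<alpha> p0 f * holder_norm \<alpha> p0 (dqn 2 g)" .
qed



lemma poly6: "(x::real) \<ge> 0 \<Longrightarrow> 5/4 * x^2 + 3/2 * x^3 \<le> (1 + x)^6"
proof -
  assume x: "x \<ge> 0"
  have e: "(1 + x)^6 = 1 + 6*x + 15*x^2 + 20*x^3 + 15*x^4 + 6*x^5 + x^6"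
    by (simp add: power_def algebra_simps eval_nat_numeral)
  have "0 \<le> x^4" "0 \<le> x^5" "0 \<le> x^6" "0 \<le> x^2" "0 \<le> x^3" using x by auto
  then show ?thesis unfolding e using x by linarith
qed

lemma case3_arith:
  fixes L b0 b1 b2 a0 a1 x :: real
  assumes nn: "0 \<le> b0" "0 \<le> b1" "0 \<le> b2" "0 \<le> a0" "0 \<le> a1"
    and x: "x = 2 * b0 + a0 + (2 * b1 + a1)"
    and L1: "1 \<le> L" and b2: "b2 \<le> sqrt L" and s6: "(1 + x)^6 \<le> sqrt L"
  shows "L * b0^2 + 2 * (a1 * (2 * (b0 * b1))) + a0 * (2 * (b0 * b2) + 2 * b1^2) \<le> L * sqrt L"
proof -
  have x0: "0 \<le> x" using nn x by simp
  have s1: "1 \<le> sqrt L" using L1 by simp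
  have "sqrt L * 1 \<le> sqrt L * sqrt L" using s1 by (intro mult_left_mono) auto
  then have sL: "sqrt L \<le> L" using L1 by simp
  have hb0: "b0 \<le> x/2" "b1 \<le> x/2" "a0 \<le> x" "a1 \<le> x" using nn x by auto
  have t1: "L * b0^2 \<le> L * (x^2/4)"
  proof -
    have "b0^2 \<le> (x/2)^2" using hb0 nn by (intro power_mono) auto
    then show ?thesis using L1 by (simp add: power_divide)
  qed
  have t2: "2 * (a1 * (2 * (b0 * b1))) \<le> L * x^3"
  proof -
    have "b0 * b1 \<le> (x/2) * (x/2)" using hb0 nn by (intro mult_mono) auto
    then have "a1 * (b0 * b1) \<le> x * ((x/2) * (x/2))" using hb0 nn by (intro mult_mono) auto
    then have "2 * (a1 * (2 * (b0 * b1))) \<le> x^3" by (simp add: power3_eq_cube algebra_simps)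
    also have "\<dots> \<le> L * x^3" using L1 x0 by (simp add: mult_le_cancel_right1)
    finally show ?thesis .
  qed
  have t3: "a0 * (2 * (b0 * b2)) \<le> L * x^2"
  proof -
    have "b2 \<le> L" using b2 sL by linarith
    then have "b0 * b2 \<le> (x/2) * L" using hb0 nn by (intro mult_mono) auto
    from mult_mono[OF hb0(3) this] have "a0 * (b0 * b2) \<le> x * ((x/2) * L)" using nn x0 by auto
    then show ?thesis by (simp add: power2_eq_square algebra_simps)
  qed
  have t4: "a0 * (2 * b1^2) \<le> L * (x^3/2)"
  proof -
    have "b1^2 \<le> (x/2)^2" using hb0 nn by (intro power_mono) auto
    then have "a0 * b1^2 \<le> x * (x/2)^2" using hb0 nn x0 by (intro mult_mono) auto
    then have "a0 * (2 * b1^2) \<le> x^3/2" by (simp add: power2_eq_square power3_eq_cube algebra_simps)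
    also have "\<dots> \<le> L * (x^3/2)" using L1 x0 by (simp add: mult_le_cancel_right1)
    finally show ?thesis .
  qed
  have "L * b0^2 + 2 * (a1 * (2 * (b0 * b1))) + a0 * (2 * (b0 * b2) + 2 * b1^2)
      \<le> L * (5/4 * x^2 + 3/2 * x^3)" using t1 t2 t3 t4 by (simp add: algebra_simps)
  also have "\<dots> \<le> L * (1 + x)^6" using poly6[OF x0] L1 by (intro mult_left_mono) auto
  also have "\<dots> \<le> L * sqrt L" using s6 L1 by (intro mult_left_mono) auto
  finally show ?thesis .
qed


lemma sum_le1: "(\<Sum>l\<le>(1::nat). f l) = f 0 + (f 1 :: real)"
  by (simp add: numeral_eq_Suc atMost_Suc)

theorem lemma2p3:
  fixes p0 \<alpha> C1 :: real and N :: nat and u :: "real \<times> real \<Rightarrow> real"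
  assumes "p0 < 0" and "0 < \<alpha>" and "\<alpha> < 1"
    and "C1 > 1"
    and C1_prop: "\<And>M (L::real) (u1 :: real \<times> real \<Rightarrow> real) u2 u3.
       M \<ge> 3 \<Longrightarrow> L \<ge> 1 \<Longrightarrow>
       Cq M \<alpha> p0 u1 \<Longrightarrow> Cq M \<alpha> p0 u2 \<Longrightarrow> Cq M \<alpha> p0 u3 \<Longrightarrow>
       (\<forall>n. 2 \<le> n \<and> n \<le> M \<longrightarrow>
          holder_norm \<alpha> p0 (dqn n u1) \<le> L ^ (n - 1) * fact (n - 2) \<and>
          holder_norm \<alpha> p0 (dqn n u2) \<le> L ^ (n - 1) * fact (n - 2) \<and>
          holder_norm \<alpha> p0 (dqn n u3) \<le> L ^ (n - 1) * fact (n - 2)) \<Longrightarrow>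
       (\<forall>n. 2 \<le> n \<and> n \<le> M \<longrightarrow>
          holder_norm \<alpha> p0 (dqn n (\<lambda>z. u1 z * u2 z * u3 z))
            \<le> C1 * (1 + (\<Sum>l\<le>1. holder_norm \<alpha> p0 (dqn l u1) + holder_norm \<alpha> p0 (dqn l u2)
                                 + holder_norm \<alpha> p0 (dqn l u3))) ^ 6 * L ^ (n - 1) * fact (n - 2))"
    and "N \<ge> 3"
    and "Cq N \<alpha> p0 u"
    and "Inf (u ` Omega p0) > 0"
    and L_ge: "L \<ge> (holder_norm \<alpha> p0 (dqn 2 (\<lambda>z. 1 / u z)))\<^sup>2
                + C1\<^sup>2 * (1 + (\<Sum>l\<le>1. 2 * holder_norm \<alpha> p0 (dqn l (\<lambda>z. 1 / u z))
                                       + holder_norm \<alpha> p0 (dqn (1 + l) u))) ^ 12"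
    and "\<And>n. 3 \<le> n \<Longrightarrow> n \<le> N \<Longrightarrow> holder_norm \<alpha> p0 (dqn n u) \<le> L ^ (n - 2) * fact (n - 3)"
  shows "\<forall>n. 2 \<le> n \<and> n \<le> N \<longrightarrow>
           holder_norm \<alpha> p0 (dqn n (\<lambda>z. 1 / u z)) \<le> L powr (real n - 3 / 2) * fact (n - 2)"
proof -
  note p = assms(1)
  define c where "c = Inf (u ` Omega p0)"
  have c0: "c > 0" using assms(8) c_def by simp
  have Du: "D \<alpha> p0 N u" and pu: "periodic_q u" using assms(7) by (auto simp: Cq_D)
  have lb: "\<And>z. z \<in> OmegaBar p0 \<Longrightarrow> u z \<ge> c"
    unfolding c_def using pos_on_Ob[OF p D_hol[OF Du, of 0, simplified] assms(2) assms(8)] by simp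
  define v where "v = (\<lambda>z. 1 / u z)"
  have Dv: "D \<alpha> p0 N v" unfolding v_def using D_inv[OF p c0 lb Du] .
  have pv: "periodic_q v" unfolding v_def using periodic_inv[OF pu] .
  define a where "a = (\<lambda>z. - dq u z)"
  obtain N' where N': "N = Suc N'" using assms(6) by (cases N) auto
  have Ddu: "D \<alpha> p0 N' (dq u)" using Du unfolding N' D_Suc by auto
  have Da: "D \<alpha> p0 N' a" unfolding a_def using D_neg[OF p Ddu] .
  have pa: "periodic_q a" unfolding a_def using periodic_neg[OF periodic_dq[OF pu]] .
  have hna: "holder_norm \<alpha> p0 (dqn m a) = holder_norm \<alpha> p0 (dqn (Suc m) u)" if "m \<le> N'" for m
  proof -
    have "holder_norm \<alpha> p0 (dqn m a) = holder_norm \<alpha> p0 (\<lambda>z. - dqn m (dq u) z)"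
      unfolding a_def by (rule hn_cong) (use dqn_neg[OF Ddu that] in auto)
    then show ?thesis by (simp add: hn_neg dqn_Suc)
  qed
  have nz: "u z \<noteq> 0" if "z \<in> OmegaBar p0" for z using lb[OF that] c0 by auto
  have dqv: "dq v z = a z * v z * v z" if "z \<in> OmegaBar p0" for z
    unfolding v_def a_def using dq_inv(1)[OF D_diff[OF Du, of 0 z, simplified] nz] that assms(6) by simp
  have hnv: "holder_norm \<alpha> p0 (dqn (Suc m) v) = holder_norm \<alpha> p0 (dqn m (\<lambda>z. a z * v z * v z))" for m
    unfolding dqn_Suc by (rule hn_cong, rule dqn_cong[of p0]) (auto simp: dqv)
  have nnv: "0 \<le> holder_norm \<alpha> p0 (dqn m v)" if "m \<le> N" for m using hn_nonneg[OF D_hol[OF Dv that] p] .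
  have nnu: "0 \<le> holder_norm \<alpha> p0 (dqn m u)" if "m \<le> N" for m using hn_nonneg[OF D_hol[OF Du that] p] .
  define b0 where "b0 = holder_norm \<alpha> p0 v"
  define b1 where "b1 = holder_norm \<alpha> p0 (dqn 1 v)"
  define b2 where "b2 = holder_norm \<alpha> p0 (dqn 2 v)"
  define a0 where "a0 = holder_norm \<alpha> p0 (dqn 1 u)"
  define a1 where "a1 = holder_norm \<alpha> p0 (dqn 2 u)"
  define x where "x = 2 * b0 + a0 + (2 * b1 + a1)"
  have xsum: "(\<Sum>l\<le>1. 2 * holder_norm \<alpha> p0 (dqn l (\<lambda>z. 1 / u z)) + holder_norm \<alpha> p0 (dqn (1 + l) u)) = x"
    unfolding sum_le1 x_def b0_def b1_def a0_def a1_def v_def by (simp add: numeral_2_eq_2)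
  have nn: "0 \<le> b0" "0 \<le> b1" "0 \<le> b2" "0 \<le> a0" "0 \<le> a1"
    using nnv[of 0] nnv[of 1] nnv[of 2] nnu[of 1] nnu[of 2] assms(6)
    by (auto simp: b0_def b1_def b2_def a0_def a1_def)
  have x0: "0 \<le> x" using nn x_def by simp
  have Lx: "L \<ge> b2^2 + C1^2 * (1 + x)^12" using L_ge unfolding xsum b2_def v_def .
  have C12: "C1^2 \<ge> 1" using assms(4) by (simp add: one_le_power)
  have x12: "(1 + x)^12 \<ge> 1" using x0 by (simp add: one_le_power)
  have Cx: "1 \<le> C1^2 * (1 + x)^12" using mult_mono[OF C12 x12] by simp
  have b2sq: "0 \<le> b2^2" by simp
  have L1: "1 \<le> L" using Lx Cx b2sq by linarith
  have L0: "0 < L" using L1 by simp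
  have Cs: "C1 * (1 + x)^6 \<le> sqrt L"
  proof -
    have "(C1 * (1 + x)^6)^2 = C1^2 * (1 + x)^12" by (simp add: power_mult_distrib flip: power_mult)
    also have "\<dots> \<le> L" using Lx b2sq by linarith
    finally show ?thesis by (rule real_le_rsqrt)
  qed
  have s6: "(1 + x)^6 \<le> sqrt L"
  proof -
    have "(1 + x)^6 \<le> C1 * (1 + x)^6" using assms(4) x0 by (simp add: mult_le_cancel_right1)
    then show ?thesis using Cs by linarith
  qed
  have b2L: "b2 \<le> sqrt L" using Lx Cx by (intro real_le_rsqrt) linarith
  have main: "holder_norm \<alpha> p0 (dqn n v) \<le> L powr (real n - 3 / 2) * fact (n - 2)"
    if "2 \<le> n" "n \<le> N" for n
    using that
  proof (induction n rule: less_induct)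
    case (less n)
    consider "n = 2" | "n = 3" | "n \<ge> 4" using less.prems by linarith
    then show ?case
    proof cases
      case 1
      have "L powr (real n - 3 / 2) = sqrt L" using 1 L0 by (simp add: powr_half_sqrt[symmetric])
      then show ?thesis using 1 b2L b2_def by simp
    next
      case 2
      have D2v: "D \<alpha> p0 2 v" using D_le[OF Dv] assms(6) by simp
      have D2a: "D \<alpha> p0 2 a" using D_le[OF Da] assms(6) N' by simp
      define w where "w = (\<lambda>z. v z * v z)"
      note pw = prod2[OF p D2v D2v, folded w_def]
      note paw = prod2[OF p D2a pw(1)]
      have e: "holder_norm \<alpha> p0 (dqn 3 v) = holder_norm \<alpha> p0 (dqn 2 (\<lambda>z. a z * w z))"
        using hnv[of 2] by (simp add: numeral_3_eq_3 numeral_2_eq_2 w_def mult.assoc)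
      define A0 where "A0 = holder_norm \<alpha> p0 a"
      define A1 where "A1 = holder_norm \<alpha> p0 (dqn 1 a)"
      define A2 where "A2 = holder_norm \<alpha> p0 (dqn 2 a)"
      define W0 where "W0 = holder_norm \<alpha> p0 w"
      define W1 where "W1 = holder_norm \<alpha> p0 (dqn 1 w)"
      define W2 where "W2 = holder_norm \<alpha> p0 (dqn 2 w)"
      have A: "A0 = a0" "A1 = a1" "A2 \<le> L"
        using hna[of 0] hna[of 1] hna[of 2] assms(6) N' assms(10)[of 3]
        by (auto simp: A0_def A1_def A2_def a0_def a1_def numeral_3_eq_3 numeral_2_eq_2)
      have W: "W0 \<le> b0^2" "W1 \<le> 2 * (b0 * b1)" "W2 \<le> 2 * (b0 * b2) + 2 * b1^2"
        using pw(2,3,4) by (auto simp: W0_def W1_def W2_def b0_def b1_def b2_def power2_eq_square algebra_simps)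
      have nW: "0 \<le> W0" "0 \<le> W1" "0 \<le> W2" "0 \<le> A2"
        using hn_nonneg[OF D_hol[OF pw(1)] p] hn_nonneg[OF D_hol[OF D2a] p]
        unfolding W0_def W1_def W2_def A2_def by (metis dqn_0 le_numeral_extra(3) zero_le_numeral one_le_numeral order_refl)+
      have "holder_norm \<alpha> p0 (dqn 3 v) \<le> A2 * W0 + 2 * (A1 * W1) + A0 * W2"
        using e paw(4) by (simp add: A0_def A1_def A2_def W0_def W1_def W2_def)
      also have "\<dots> \<le> L * b0^2 + 2 * (a1 * (2 * (b0 * b1))) + a0 * (2 * (b0 * b2) + 2 * b1^2)"
      proof -
        have "A2 * W0 \<le> L * b0^2" using A(3) W(1) nW by (intro mult_mono) auto
        moreover have "A1 * W1 \<le> a1 * (2 * (b0 * b1))" unfolding A(2) using W(2) nn by (intro mult_left_mono) auto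
        moreover have "A0 * W2 \<le> a0 * (2 * (b0 * b2) + 2 * b1^2)" unfolding A(1) using W(3) nn by (intro mult_left_mono) auto
        ultimately show ?thesis by linarith
      qed
      also have "\<dots> \<le> L * sqrt L" by (rule case3_arith[OF nn x_def L1 b2L s6])
      also have "\<dots> = L powr (real n - 3 / 2) * fact (n - 2)"
      proof -
        have "real n - 3 / 2 = 1 + 1/2" using 2 by simp
        then have "L powr (real n - 3 / 2) = L powr 1 * L powr (1/2)"
          by (simp only: powr_add)
        then show ?thesis using 2 L0 by (simp add: powr_half_sqrt)
      qed
      finally show ?thesis using 2 by simp
    next
      case 3
      define M where "M = n - 1"
      have M3: "M \<ge> 3" and MN: "M \<le> N'" and nM: "n = Suc M" using 3 less.prems N' by (auto simp: M_def)
      have CqA: "Cq M \<alpha> p0 a" using pa D_le[OF Da MN] by (simp add: Cq_D)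
      have CqV: "Cq M \<alpha> p0 v" using pv D_le[OF Dv] MN N' by (simp add: Cq_D)
      have bnd: "\<forall>m. 2 \<le> m \<and> m \<le> M \<longrightarrow>
          holder_norm \<alpha> p0 (dqn m a) \<le> L ^ (m - 1) * fact (m - 2) \<and>
          holder_norm \<alpha> p0 (dqn m v) \<le> L ^ (m - 1) * fact (m - 2) \<and>
          holder_norm \<alpha> p0 (dqn m v) \<le> L ^ (m - 1) * fact (m - 2)"
      proof (intro allI impI)
        fix m assume m: "2 \<le> m \<and> m \<le> M"
        have 1: "holder_norm \<alpha> p0 (dqn m a) \<le> L ^ (m - 1) * fact (m - 2)"
          using hna[of m] m MN assms(10)[of "Suc m"] N' by (simp add: numeral_eq_Suc)
        have "holder_norm \<alpha> p0 (dqn m v) \<le> L powr (real m - 3 / 2) * fact (m - 2)"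
          using less.IH[of m] m nM MN N' by simp
        also have "\<dots> \<le> L powr (real (m - 1)) * fact (m - 2)"
          using m L1 by (intro mult_right_mono powr_mono) (auto simp: of_nat_diff)
        also have "\<dots> = L ^ (m - 1) * fact (m - 2)" using L0 by (simp add: powr_realpow)
        finally show "holder_norm \<alpha> p0 (dqn m a) \<le> L ^ (m - 1) * fact (m - 2) \<and>
          holder_norm \<alpha> p0 (dqn m v) \<le> L ^ (m - 1) * fact (m - 2) \<and>
          holder_norm \<alpha> p0 (dqn m v) \<le> L ^ (m - 1) * fact (m - 2)" using 1 by simp
      qed
      have sigma: "(\<Sum>l\<le>1. holder_norm \<alpha> p0 (dqn l a) + holder_norm \<alpha> p0 (dqn l v)
                                 + holder_norm \<alpha> p0 (dqn l v)) = x"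
        using hna[of 0] hna[of 1] MN M3
        unfolding sum_le1 x_def b0_def b1_def a0_def a1_def by (simp add: numeral_2_eq_2)
      have allM: "\<forall>n. 2 \<le> n \<and> n \<le> M \<longrightarrow> holder_norm \<alpha> p0 (dqn n (\<lambda>z. a z * v z * v z)) \<le> C1 * (1 + x)^6 * L ^ (n - 1) * fact (n - 2)"
        using C1_prop[OF M3 L1 CqA CqV CqV bnd] unfolding sigma .
      have M2: "2 \<le> M \<and> M \<le> M" using M3 by simp
      have "holder_norm \<alpha> p0 (dqn M (\<lambda>z. a z * v z * v z)) \<le> C1 * (1 + x)^6 * L ^ (M - 1) * fact (M - 2)"
        using mp[OF spec[OF allM, of M] M2] .
      then have "holder_norm \<alpha> p0 (dqn n v) \<le> C1 * (1 + x)^6 * L ^ (n - 2) * fact (n - 3)"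
        using hnv[of M] nM by simp
      also have "\<dots> \<le> sqrt L * L ^ (n - 2) * fact (n - 2)"
      proof -
        have "fact (n - 3) \<le> (fact (n - 2) :: real)" by (intro fact_mono) auto
        moreover have "C1 * (1 + x)^6 * L ^ (n - 2) \<le> sqrt L * L ^ (n - 2)"
          using Cs L0 by (intro mult_right_mono) auto
        ultimately show ?thesis using L0 Cs by (intro mult_mono) auto
      qed
      also have "\<dots> = L powr (real n - 3 / 2) * fact (n - 2)"
      proof -
        have "real n - 3 / 2 = real (n - 2) + 1/2" using 3 by (simp add: of_nat_diff)
        then have "L powr (real n - 3 / 2) = L powr (real (n - 2)) * L powr (1/2)"
          by (simp only: powr_add)
        also have "\<dots> = L ^ (n - 2) * sqrt L"
          using L0 by (simp only: powr_realpow[OF L0] powr_half_sqrt[of L])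
        finally show ?thesis by (simp add: mult_ac)
      qed
      finally show ?thesis .
    qed
  qed
  show ?thesis using main unfolding v_def by blast
qed

end
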